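(* For all types $A$ and $B$: $A \simeq B$ holds if and only if there exist types $A'$ and $B'$ such that $A \equiv A'$, $A' \sim B'$ and $B' \equiv B$.
   Context: Types and rows share one grammar: $A,B,C,\rho ::= X \mid \alpha \mid \star \mid \iota \mid A\to B \mid \forall X{:}K.\,A \mid [\rho] \mid \langle\rho\rangle \mid \cdot \mid \ell{:}A;\rho$, where $X$ ranges over type variables (bound by $\forall$), $\alpha$ over type names, $\star$ is the dynamic type (also serving as the dynamic row), $\iota$ over base types, $[\rho]$ and $\langle\rho\rangle$ are record and variant types, $\cdot$ is the empty row, $\ell$ ranges over labels, and $K\in\{\mathsf T,\mathsf R\}$ is a kind. Types are identified up to renaming of bound variables; $\mathit{ftv}(A)$ is the set of free type variables. Row matching $\rho \triangleright_\ell A,\rho'$ is defined by: $(\ell{:}A;\rho)\triangleright_\ell A,\rho$; if $\ell'\neq\ell$ and $\rho\triangleright_\ell A,\rho'$ then $(\ell'{:}B;\rho)\triangleright_\ell A,(\ell'{:}B;\rho')$; and $\star\triangleright_\ell \star,\star$. $\mathbf{QPoly}(A)$ holds iff $A$ is not of the form $\forall X{:}K.\,B$ and $\star$ occurs in $A$. Row concatenation $\rho_1\odot\rho_2$ is defined only when $\rho_1=\ell_1{:}A_1;\dots;\ell_n{:}A_n;\cdot$, and then equals $\ell_1{:}A_1;\dots;\ell_n{:}A_n;\rho_2$. $\mathit{dom}(\rho)$ is the set of labels in the top-level label prefix of $\rho$. A row $\rho$ ends with $\star$ if $\rho=\rho'\odot\star$ for some $\rho'$. Type equivalence $\equiv$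 is the least equivalence relation that is a congruence for $\to$, $\forall X{:}K.\,-$, $[-]$, $\langle-\rangle$ and $\ell{:}-;-$, and contains $\ell{:}A;\ell'{:}B;\rho \equiv \ell'{:}B;\ell{:}A;\rho$ whenever $\ell\neq\ell'$. Consistency $\simeq$ is defined inductively: $A\simeq A$; $\star\simeq A$; $A\simeq\star$; $A_1\to A_2\simeq B_1\to B_2$ if $A_1\simeq B_1$ and $A_2\simeq B_2$; $\forall X{:}K.A\simeq\forall X{:}K.B$ if $A\simeq B$; $\forall X{:}K.A\simeq B$ if $\mathbf{QPoly}(B)$, $X\notin\mathit{ftv}(B)$ and $A\simeq B$; $A\simeq\forall X{:}K.B$ if $\mathbf{QPoly}(A)$, $X\notin\mathit{ftv}(A)$ and $A\simeq B$; $[\rho_1]\simeq[\rho_2]$ and $\langle\rho_1\rangle\simeq\langle\rho_2\rangle$ if $\rho_1\simeq\rho_2$; $\ell{:}A;\rho_1\simeq B$ if $B\triangleright_\ell B',\rho_2$, $A\simeq B'$ and $\rho_1\simeq\rho_2$; $A\simeq \ell{:}B;\rho_2$ if $A\triangleright_\ell A',\rho_1$, $A'\simeq B$ and $\rho_1\simeq\rho_2$. The relation $\sim$ is defined inductively by the same rules as $\simeq$ for reflexivity, $\star$ on either side, $\to$, $\forall$ (all three $\forall$ rules, with $\sim$ in place of $\simeq$), records and variants, together with: $\ell{:}A;\rho_1\sim\ell{:}B;\rho_2$ if $A\sim B$ and $\rho_1\sim\rho_2$; $\ell{:}A;\rho_1\sim\rho_2$ if $\ell\notin\mathit{dom}(\rho_2)$,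 $\rho_2$ ends with $\star$ and $\rho_1\sim\rho_2$; $\rho_1\sim\ell{:}B;\rho_2$ if $\ell\notin\mathit{dom}(\rho_1)$, $\rho_1$ ends with $\star$ and $\rho_1\sim\rho_2$. *)

theory Defs
  imports Main
begin

(* Kinds T (types) and R (rows) *)
datatype kind = KT | KR

(* Types and rows share one grammar.  Bound type variables X are represented by
   de Bruijn indices (so types are identified up to renaming of bound variables);
   type names, base types and labels are drawn from nat. *)
datatype ty =
    TVar nat
  | TName nat
  | Dyn                 (* star: dynamic type / dynamic row *)
  | Base nat
  | Fun ty ty
  | All kind ty
  | Rcd ty
  | Vnt ty
  | REmpty
  | RCons nat ty ty

fun lift :: "nat \<Rightarrow> ty \<Rightarrow> ty" where
  "lift k (TVar n) = (if n < k then TVar n else TVar (Suc n))"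
| "lift k (TName a) = TName a"
| "lift k Dyn = Dyn"
| "lift k (Base i) = Base i"
| "lift k (Fun A B) = Fun (lift k A) (lift k B)"
| "lift k (All K A) = All K (lift (Suc k) A)"
| "lift k (Rcd r) = Rcd (lift k r)"
| "lift k (Vnt r) = Vnt (lift k r)"
| "lift k REmpty = REmpty"
| "lift k (RCons l A r) = RCons l (lift k A) (lift k r)"

fun ftv :: "ty \<Rightarrow> nat set" where
  "ftv (TVar n) = {n}"
| "ftv (TName a) = {}"
| "ftv Dyn = {}"
| "ftv (Base i) = {}"
| "ftv (Fun A B) = ftv A \<union> ftv B"
| "ftv (All K A) = (\<lambda>n. n - 1) ` (ftv A - {0})"
| "ftv (Rcd r) = ftv r"
| "ftv (Vnt r) = ftv r"
| "ftv REmpty = {}"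
| "ftv (RCons l A r) = ftv A \<union> ftv r"

fun dyn_occurs :: "ty \<Rightarrow> bool" where
  "dyn_occurs (TVar n) = False"
| "dyn_occurs (TName a) = False"
| "dyn_occurs Dyn = True"
| "dyn_occurs (Base i) = False"
| "dyn_occurs (Fun A B) = (dyn_occurs A \<or> dyn_occurs B)"
| "dyn_occurs (All K A) = dyn_occurs A"
| "dyn_occurs (Rcd r) = dyn_occurs r"
| "dyn_occurs (Vnt r) = dyn_occurs r"
| "dyn_occurs REmpty = False"
| "dyn_occurs (RCons l A r) = (dyn_occurs A \<or> dyn_occurs r)"

definition QPoly :: "ty \<Rightarrow> bool" where
  "QPoly A \<longleftrightarrow> (\<nexists>K B. A = All K B) \<and> dyn_occurs A"

inductive rmatch :: "ty \<Rightarrow> nat \<Rightarrow> ty \<Rightarrow> ty \<Rightarrow> bool" where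
  rm_head: "rmatch (RCons l A r) l A r"
| rm_tail: "l' \<noteq> l \<Longrightarrow> rmatch r l A r' \<Longrightarrow> rmatch (RCons l' B r) l A (RCons l' B r')"
| rm_dyn: "rmatch Dyn l Dyn Dyn"

fun rconcat :: "ty \<Rightarrow> ty \<Rightarrow> ty option" where
  "rconcat REmpty r2 = Some r2"
| "rconcat (RCons l A r) r2 = map_option (RCons l A) (rconcat r r2)"
| "rconcat _ r2 = None"

definition ends_dyn :: "ty \<Rightarrow> bool" where
  "ends_dyn r \<longleftrightarrow> (\<exists>r'. rconcat r' Dyn = Some r)"

fun rdom :: "ty \<Rightarrow> nat set" where
  "rdom (RCons l A r) = insert l (rdom r)"
| "rdom _ = {}"

inductive teq :: "ty \<Rightarrow> ty \<Rightarrow> bool" where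
  teq_refl: "teq A A"
| teq_sym: "teq A B \<Longrightarrow> teq B A"
| teq_trans: "teq A B \<Longrightarrow> teq B C \<Longrightarrow> teq A C"
| teq_fun: "teq A1 B1 \<Longrightarrow> teq A2 B2 \<Longrightarrow> teq (Fun A1 A2) (Fun B1 B2)"
| teq_all: "teq A B \<Longrightarrow> teq (All K A) (All K B)"
| teq_rcd: "teq A B \<Longrightarrow> teq (Rcd A) (Rcd B)"
| teq_vnt: "teq A B \<Longrightarrow> teq (Vnt A) (Vnt B)"
| teq_rcons: "teq A B \<Longrightarrow> teq r1 r2 \<Longrightarrow> teq (RCons l A r1) (RCons l B r2)"
| teq_swap: "l \<noteq> l' \<Longrightarrow> teq (RCons l A (RCons l' B r)) (RCons l' B (RCons l A r))"

(* consistency  A \<simeq> B.  The side condition X \<notin> ftv(B) of the named presentation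
   is realised by lifting B under the binder (de Bruijn). *)
inductive cons :: "ty \<Rightarrow> ty \<Rightarrow> bool" where
  c_refl: "cons A A"
| c_dynL: "cons Dyn A"
| c_dynR: "cons A Dyn"
| c_fun: "cons A1 B1 \<Longrightarrow> cons A2 B2 \<Longrightarrow> cons (Fun A1 A2) (Fun B1 B2)"
| c_all: "cons A B \<Longrightarrow> cons (All K A) (All K B)"
| c_allL: "QPoly B \<Longrightarrow> cons A (lift 0 B) \<Longrightarrow> cons (All K A) B"
| c_allR: "QPoly A \<Longrightarrow> cons (lift 0 A) B \<Longrightarrow> cons A (All K B)"
| c_rcd: "cons r1 r2 \<Longrightarrow> cons (Rcd r1) (Rcd r2)"
| c_vnt: "cons r1 r2 \<Longrightarrow> cons (Vnt r1) (Vnt r2)"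
| c_rowL: "rmatch B l B' r2 \<Longrightarrow> cons A B' \<Longrightarrow> cons r1 r2 \<Longrightarrow> cons (RCons l A r1) B"
| c_rowR: "rmatch A l A' r1 \<Longrightarrow> cons A' B \<Longrightarrow> cons r1 r2 \<Longrightarrow> cons A (RCons l B r2)"

inductive sim :: "ty \<Rightarrow> ty \<Rightarrow> bool" where
  s_refl: "sim A A"
| s_dynL: "sim Dyn A"
| s_dynR: "sim A Dyn"
| s_fun: "sim A1 B1 \<Longrightarrow> sim A2 B2 \<Longrightarrow> sim (Fun A1 A2) (Fun B1 B2)"
| s_all: "sim A B \<Longrightarrow> sim (All K A) (All K B)"
| s_allL: "QPoly B \<Longrightarrow> sim A (lift 0 B) \<Longrightarrow> sim (All K A) B"
| s_allR: "QPoly A \<Longrightarrow> sim (lift 0 A) B \<Longrightarrow> sim A (All K B)"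
| s_rcd: "sim r1 r2 \<Longrightarrow> sim (Rcd r1) (Rcd r2)"
| s_vnt: "sim r1 r2 \<Longrightarrow> sim (Vnt r1) (Vnt r2)"
| s_rcons: "sim A B \<Longrightarrow> sim r1 r2 \<Longrightarrow> sim (RCons l A r1) (RCons l B r2)"
| s_rowL: "l \<notin> rdom r2 \<Longrightarrow> ends_dyn r2 \<Longrightarrow> sim r1 r2 \<Longrightarrow> sim (RCons l A r1) r2"
| s_rowR: "l \<notin> rdom r1 \<Longrightarrow> ends_dyn r1 \<Longrightarrow> sim r1 r2 \<Longrightarrow> sim r1 (RCons l B r2)"

end

theory Submission
  imports Defs
begin

inductive step :: "ty \<Rightarrow> ty \<Rightarrow> bool" where
  st_swap: "l \<noteq> l' \<Longrightarrow> step (RCons l A (RCons l' B r)) (RCons l' B (RCons l A r))"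
| st_fun1: "step A A' \<Longrightarrow> step (Fun A B) (Fun A' B)"
| st_fun2: "step B B' \<Longrightarrow> step (Fun A B) (Fun A B')"
| st_all: "step A A' \<Longrightarrow> step (All K A) (All K A')"
| st_rcd: "step A A' \<Longrightarrow> step (Rcd A) (Rcd A')"
| st_vnt: "step A A' \<Longrightarrow> step (Vnt A) (Vnt A')"
| st_rc1: "step A A' \<Longrightarrow> step (RCons l A r) (RCons l A' r)"
| st_rc2: "step r r' \<Longrightarrow> step (RCons l A r) (RCons l A r')"

inductive_cases stE_Dyn: "step Dyn B"
inductive_cases stE_Fun: "step (Fun A B) C"
inductive_cases stE_All: "step (All K A) C"
inductive_cases stE_Rcd: "step (Rcd A) C"
inductive_cases stE_Vnt: "step (Vnt A) C"
inductive_cases stE_RCons[consumes 1, case_names 1 2 3]: "step (RCons l A r) C"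

lemma step_sym: "step A B \<Longrightarrow> step B A"
  by (induction rule: step.induct) (auto intro: step.intros)

lemma steps_sym: "step\<^sup>*\<^sup>* A B \<Longrightarrow> step\<^sup>*\<^sup>* B A"
  by (induction rule: rtranclp_induct) (auto intro: step_sym converse_rtranclp_into_rtranclp)

lemma steps_map: "step\<^sup>*\<^sup>* a b \<Longrightarrow> (\<And>x y. step x y \<Longrightarrow> step (f x) (f y)) \<Longrightarrow> step\<^sup>*\<^sup>* (f a) (f b)"
  by (induction rule: rtranclp_induct) (auto intro: rtranclp.rtrancl_into_rtrancl)

lemma teq_steps: "teq A B \<Longrightarrow> step\<^sup>*\<^sup>* A B"
proof (induction rule: teq.induct)
  case (teq_sym A B) then show ?case by (blast intro: steps_sym)
next
  case (teq_trans A B C) then show ?case by auto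
next
  case (teq_fun A1 B1 A2 B2)
  have "step\<^sup>*\<^sup>* (Fun A1 A2) (Fun B1 A2)" using steps_map[OF teq_fun(3), of "\<lambda>x. Fun x A2"] by (auto intro: st_fun1)
  moreover have "step\<^sup>*\<^sup>* (Fun B1 A2) (Fun B1 B2)" using steps_map[OF teq_fun(4), of "\<lambda>x. Fun B1 x"] by (auto intro: st_fun2)
  ultimately show ?case by auto
next
  case (teq_all A B K) then show ?case using steps_map[of A B "All K"] by (auto intro: st_all)
next
  case (teq_rcd A B) then show ?case using steps_map[of A B "Rcd"] by (auto intro: st_rcd)
next
  case (teq_vnt A B) then show ?case using steps_map[of A B "Vnt"] by (auto intro: st_vnt)
next
  case (teq_rcons A B r1 r2 l)
  have "step\<^sup>*\<^sup>* (RCons l A r1) (RCons l B r1)" using steps_map[OF teq_rcons(3), of "\<lambda>x. RCons l x r1"] by (auto intro: st_rc1)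
  moreover have "step\<^sup>*\<^sup>* (RCons l B r1) (RCons l B r2)" using steps_map[OF teq_rcons(4), of "\<lambda>x. RCons l B x"] by (auto intro: st_rc2)
  ultimately show ?case by auto
next
  case (teq_swap l l' A B r) then show ?case by (auto intro: st_swap)
qed auto

lemma step_teq: "step A B \<Longrightarrow> teq A B"
  by (induction rule: step.induct) (auto intro: teq.intros)

lemma steps_teq: "step\<^sup>*\<^sup>* A B \<Longrightarrow> teq A B"
  by (induction rule: rtranclp_induct) (auto intro: teq.intros step_teq)

lemma step_lift: "step A B \<Longrightarrow> step (lift k A) (lift k B)"
  by (induction arbitrary: k rule: step.induct) (auto intro: step.intros)

lemma lift_eq_RCons: "lift k B = RCons l A r \<longleftrightarrow> (\<exists>a b. B = RCons l a b \<and> A = lift k a \<and> r = lift k b)"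
  by (cases B) auto
lemma lift_eq_RCons': "RCons l A r = lift k B \<longleftrightarrow> (\<exists>a b. B = RCons l a b \<and> A = lift k a \<and> r = lift k b)"
  by (cases B) auto
lemma lift_eq_Fun: "lift k B = Fun A r \<longleftrightarrow> (\<exists>a b. B = Fun a b \<and> A = lift k a \<and> r = lift k b)"
  by (cases B) auto
lemma lift_eq_All: "lift k B = All K A \<longleftrightarrow> (\<exists>a. B = All K a \<and> A = lift (Suc k) a)"
  by (cases B) auto
lemma lift_eq_Rcd: "lift k B = Rcd A \<longleftrightarrow> (\<exists>a. B = Rcd a \<and> A = lift k a)"
  by (cases B) auto
lemma lift_eq_Vnt: "lift k B = Vnt A \<longleftrightarrow> (\<exists>a. B = Vnt a \<and> A = lift k a)"
  by (cases B) auto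

lemma step_unlift: "step X C \<Longrightarrow> lift k B = X \<Longrightarrow> \<exists>B'. C = lift k B' \<and> step B B'"
proof (induction arbitrary: k B rule: step.induct)
  case (st_swap l l' A B0 r)
  then obtain a b c where "B = RCons l a (RCons l' b c)" "A = lift k a" "B0 = lift k b" "r = lift k c"
    by (auto simp: lift_eq_RCons lift_eq_RCons')
  with st_swap show ?case by (auto intro!: exI[of _ "RCons l' b (RCons l a c)"] step.intros)
next
  case (st_fun1 A A' B0)
  then obtain a b where e: "B = Fun a b" "A = lift k a" "B0 = lift k b" by (auto simp: lift_eq_Fun)
  with st_fun1 obtain a' where "A' = lift k a'" "step a a'" by blast
  with e show ?case by (auto intro!: exI[of _ "Fun a' b"] step.intros)
next
  case (st_fun2 B0 B' A)
  then obtain a b where e: "B = Fun a b" "A = lift k a" "B0 = lift k b" by (auto simp: lift_eq_Fun)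
  with st_fun2 obtain b' where "B' = lift k b'" "step b b'" by blast
  with e show ?case by (auto intro!: exI[of _ "Fun a b'"] step.intros)
next
  case (st_all A A' K)
  then obtain a where e: "B = All K a" "A = lift (Suc k) a" by (auto simp: lift_eq_All)
  with st_all obtain a' where "A' = lift (Suc k) a'" "step a a'" by blast
  with e show ?case by (auto intro!: exI[of _ "All K a'"] step.intros)
next
  case (st_rcd A A')
  then obtain a where e: "B = Rcd a" "A = lift k a" by (auto simp: lift_eq_Rcd)
  with st_rcd obtain a' where "A' = lift k a'" "step a a'" by blast
  with e show ?case by (auto intro!: exI[of _ "Rcd a'"] step.intros)
next
  case (st_vnt A A')
  then obtain a where e: "B = Vnt a" "A = lift k a" by (auto simp: lift_eq_Vnt)
  with st_vnt obtain a' where "A' = lift k a'" "step a a'" by blast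
  with e show ?case by (auto intro!: exI[of _ "Vnt a'"] step.intros)
next
  case (st_rc1 A A' l r)
  then obtain a b where e: "B = RCons l a b" "A = lift k a" "r = lift k b" by (auto simp: lift_eq_RCons)
  with st_rc1 obtain a' where "A' = lift k a'" "step a a'" by blast
  with e show ?case by (auto intro!: exI[of _ "RCons l a' b"] step.intros)
next
  case (st_rc2 r r' l A)
  then obtain a b where e: "B = RCons l a b" "A = lift k a" "r = lift k b" by (auto simp: lift_eq_RCons)
  with st_rc2 obtain b' where "r' = lift k b'" "step b b'" by blast
  with e show ?case by (auto intro!: exI[of _ "RCons l a b'"] step.intros)
qed

lemma steps_unlift: "step\<^sup>*\<^sup>* (lift k B) C \<Longrightarrow> \<exists>B'. C = lift k B' \<and> step\<^sup>*\<^sup>* B B'"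
proof (induction rule: rtranclp_induct)
  case base then show ?case by auto
next
  case (step y z)
  then obtain B' where "y = lift k B'" "step\<^sup>*\<^sup>* B B'" by auto
  with step_unlift[OF step(2), of k B'] show ?case by (auto intro: rtranclp.rtrancl_into_rtrancl)
qed

lemma teq_unlift: "teq C (lift k B) \<Longrightarrow> \<exists>B'. C = lift k B' \<and> teq B' B"
proof -
  assume "teq C (lift k B)"
  then have "step\<^sup>*\<^sup>* (lift k B) C" using teq_steps teq_sym by blast
  then obtain B' where "C = lift k B'" "step\<^sup>*\<^sup>* B B'" using steps_unlift by blast
  then show ?thesis using steps_teq teq_sym by blast
qed

lemma teq_inv: "teq A B \<Longrightarrow> dyn_occurs A = dyn_occurs B \<and> (\<exists>K C. A = All K C) = (\<exists>K C. B = All K C)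
   \<and> rdom A = rdom B"
  by (induction rule: teq.induct) auto

lemma teq_QPoly: "teq A B \<Longrightarrow> QPoly A = QPoly B"
  unfolding QPoly_def using teq_inv by blast

fun ed :: "ty \<Rightarrow> bool" where
  "ed Dyn = True"
| "ed (RCons l A r) = ed r"
| "ed _ = False"

lemma ends_dyn_ed: "ends_dyn r = ed r"
proof
  assume "ends_dyn r"
  then obtain r' where "rconcat r' Dyn = Some r" unfolding ends_dyn_def by auto
  then show "ed r"
    by (induction r' Dyn arbitrary: r rule: rconcat.induct) auto
next
  assume "ed r"
  then show "ends_dyn r" unfolding ends_dyn_def
  proof (induction r)
    case Dyn then show ?case by (auto intro: exI[of _ REmpty])
  next
    case (RCons l A r)
    then obtain r' where "rconcat r' Dyn = Some r" by auto
    then show ?case by (auto intro!: exI[of _ "RCons l A r'"])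
  qed auto
qed

lemma teq_ed: "teq A B \<Longrightarrow> ed A = ed B"
  by (induction rule: teq.induct) auto

lemma rmatch_dyn: "l \<notin> rdom r \<Longrightarrow> ed r \<Longrightarrow> rmatch r l Dyn r"
  by (induction r) (auto intro: rmatch.intros)


inductive_cases rmE_RCons: "rmatch (RCons k V r) l A r'"
inductive_cases rmE_Dyn: "rmatch Dyn l A r'"

lemma rm_inv: "rmatch A l A' r1 \<Longrightarrow> A = RCons l A' r1 \<or> (A = Dyn \<and> r1 = Dyn)
  \<or> (\<exists>k V A2 r1a. k \<noteq> l \<and> A = RCons k V A2 \<and> r1 = RCons k V r1a \<and> rmatch A2 l A' r1a)"
  by (induction rule: rmatch.induct) auto

lemma rm_comm: "rmatch A l A' r1 \<Longrightarrow> rmatch r1 m W r1m \<Longrightarrow> m \<noteq> l \<Longrightarrow>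
   \<exists>Am. rmatch A m W Am \<and> rmatch Am l A' r1m"
proof (induction arbitrary: r1m rule: rmatch.induct)
  case (rm_head l A r)
  then show ?case by (auto intro: rmatch.intros)
next
  case (rm_tail k l r A r' V)
  show ?case
  proof (cases "k = m")
    case True
    with rm_tail.prems have "W = V" "r1m = r'" by (auto elim: rmE_RCons)
    with True rm_tail show ?thesis by (auto intro: rmatch.intros)
  next
    case False
    with rm_tail.prems obtain r3 where "r1m = RCons k V r3" "rmatch r' m W r3" by (auto elim: rmE_RCons)
    with rm_tail obtain Am2 where "rmatch r m W Am2" "rmatch Am2 l A r3" by blast
    with False rm_tail \<open>r1m = _\<close> show ?thesis by (auto intro!: exI[of _ "RCons k V Am2"] rmatch.intros)
  qed
next
  case (rm_dyn l)
  then show ?case by (auto elim: rmE_Dyn intro: rmatch.intros)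
qed

lemma cons_refl_ins: "rmatch A l A' R \<Longrightarrow> rmatch X' l B R \<Longrightarrow> cons A' B \<Longrightarrow> cons A X'"
proof (induction arbitrary: X' rule: rmatch.induct)
  case (rm_head l A r)
  then show ?case by (auto intro: cons.intros)
next
  case (rm_tail k l r A r' V)
  from rm_inv[OF rm_tail.prems(1)] show ?case
  proof (elim disjE exE conjE)
    assume "X' = RCons l B (RCons k V r')"
    then show ?thesis using rm_tail by (auto intro: cons.intros rmatch.intros)
  next
    fix k' V' X'' r1a assume "X' = RCons k' V' X''" "RCons k V r' = RCons k' V' r1a" "rmatch X'' l B r1a"
    then show ?thesis using rm_tail by (auto intro!: c_rowL[of _ k V] intro: rmatch.intros cons.intros)
  qed auto
next
  case (rm_dyn l)
  then show ?case by (auto intro: cons.intros)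
qed

lemma cons_ins_easy: "cons r1 X \<Longrightarrow> rmatch A l A' r1 \<Longrightarrow> cons A' B \<Longrightarrow> rmatch X' l B X \<Longrightarrow>
   (\<forall>k V r. r1 \<noteq> RCons k V r) \<or> (\<forall>k V r. X \<noteq> RCons k V r) \<Longrightarrow> cons A X'"
proof -
  assume h: "cons r1 X" "rmatch A l A' r1" "cons A' B" "rmatch X' l B X"
    and nr: "(\<forall>k V r. r1 \<noteq> RCons k V r) \<or> (\<forall>k V r. X \<noteq> RCons k V r)"
  have a: "A = RCons l A' r1 \<Longrightarrow> cons A X'" using h by (metis c_rowL)
  have b: "X' = RCons l B X \<Longrightarrow> cons A X'" using h by (metis c_rowR)
  show ?thesis using rm_inv[OF h(2)] rm_inv[OF h(4)] nr a b
    by (metis c_dynL c_dynR)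
qed

lemma cons_ins: "cons r1 X \<Longrightarrow> cons r1 X \<Longrightarrow> rmatch A l A' r1 \<Longrightarrow> cons A' B \<Longrightarrow> rmatch X' l B X \<Longrightarrow> cons A X'"
proof (induction arbitrary: A X' rule: cons.induct)
  case (c_refl R)
  then show ?case using cons_refl_ins by blast
next
  case (c_rowL Y k V' X0k V r1a)
  from rm_inv[OF c_rowL.prems(2)] show ?case
  proof (elim disjE exE conjE)
    assume "A = RCons l A' (RCons k V r1a)"
    then show ?thesis using c_rowL.prems by (metis c_rowL.prems(1) c_rowL.prems(3) c_rowL.prems(4) cons.c_rowL)
  next
    assume "A = Dyn" then show ?thesis by (simp add: c_dynL)
  next
    fix k' V2 A2 r1a' assume h: "k' \<noteq> l" "A = RCons k' V2 A2" "RCons k V r1a = RCons k' V2 r1a'" "rmatch A2 l A' r1a'"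
    obtain X0' where x: "rmatch X' k V' X0'" "rmatch X0' l B X0k"
      using rm_comm[OF c_rowL.prems(4) c_rowL.hyps(1)] h by auto
    have "cons A2 X0'" using c_rowL.IH(2)[OF c_rowL.hyps(3) _ c_rowL.prems(3) x(2)] h by simp
    then show ?thesis using h x c_rowL.hyps(2) by (simp add: cons.c_rowL)
  qed
next
  case (c_rowR r1 m W' r1m W X0)
  from rm_inv[OF c_rowR.prems(4)] show ?case
  proof (elim disjE exE conjE)
    assume "X' = RCons l B (RCons m W X0)"
    then show ?thesis using c_rowR.prems by (metis cons.c_rowR)
  next
    assume "X' = Dyn" then show ?thesis by (simp add: c_dynR)
  next
    fix m' W2 X'' X0' assume h: "m' \<noteq> l" "X' = RCons m' W2 X''" "RCons m W X0 = RCons m' W2 X0'" "rmatch X'' l B X0'"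
    obtain Am where x: "rmatch A m W' Am" "rmatch Am l A' r1m"
      using rm_comm[OF c_rowR.prems(2) c_rowR.hyps(1)] h by auto
    have "cons Am X''" using c_rowR.IH(2)[OF c_rowR.hyps(3) x(2) c_rowR.prems(3)] h by simp
    then show ?thesis using h x c_rowR.hyps(2) by (simp add: cons.c_rowR)
  qed
qed ((rule cons_ins_easy, assumption, assumption, assumption, assumption, simp); fail)+


lemma step_cons: "step A B \<Longrightarrow> cons A B"
proof (induction rule: step.induct)
  case (st_swap l l' A B r)
  have "rmatch (RCons l' B (RCons l A r)) l A (RCons l' B r)"
    using st_swap by (auto intro: rmatch.intros)
  then show ?case by (rule c_rowL) (rule c_refl)+
next
  case (st_rc1 A A' l r) then show ?case by (metis c_refl c_rowL rm_head)
next
  case (st_rc2 r r' l A) then show ?case by (metis c_refl c_rowL rm_head)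
qed (auto intro: c_fun c_all c_rcd c_vnt c_refl)

lemma rm_step: "rmatch B l C r \<Longrightarrow> step B B' \<Longrightarrow>
  \<exists>C' r'. rmatch B' l C' r' \<and> (C' = C \<or> step C C') \<and> (r' = r \<or> step r r')"
proof (induction arbitrary: B' rule: rmatch.induct)
  case (rm_head l A r)
  from rm_head show ?case
    by (auto elim!: stE_RCons intro: rmatch.intros)
next
  case (rm_tail l' l r A r' B)
  from rm_tail.prems show ?case
  proof (cases rule: stE_RCons)
    case (1 l'' E r0)
    show ?thesis
    proof (cases "l'' = l")
      case True
      with 1 rm_tail.hyps have "A = E" "r' = r0" by (auto elim: rmE_RCons)
      with 1 True rm_tail.hyps show ?thesis by (auto intro: rmatch.intros)
    next
      case False
      with 1 rm_tail.hyps obtain rr0 where "r' = RCons l'' E rr0" "rmatch r0 l A rr0" by (auto elim: rmE_RCons)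
      with 1 False rm_tail.hyps have "rmatch B' l A (RCons l'' E (RCons l' B rr0))"
        "step (RCons l' B r') (RCons l'' E (RCons l' B rr0))"
        by (auto intro: rmatch.intros st_swap)
      then show ?thesis by blast
    qed
  next
    case (2 D')
    with rm_tail show ?thesis by (auto intro: rmatch.intros st_rc1)
  next
    case (3 r0)
    with rm_tail obtain C' r'' where "rmatch r0 l C' r''" "C' = A \<or> step A C'" "r'' = r' \<or> step r' r''" by blast
    with 3 rm_tail.hyps have "rmatch B' l C' (RCons l' B r'')" "RCons l' B r'' = RCons l' B r' \<or> step (RCons l' B r') (RCons l' B r'')"
      by (auto intro: rmatch.intros st_rc2)
    with \<open>C' = A \<or> step A C'\<close> show ?thesis by blast
  qed
next
  case (rm_dyn l)
  then show ?case by (auto elim: stE_Dyn)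
qed

lemma step_QPoly: "step A B \<Longrightarrow> QPoly A = QPoly B"
  using step_teq teq_QPoly by blast

lemma cons_step: "cons A B \<Longrightarrow> step B B' \<Longrightarrow> cons A B'"
proof (induction arbitrary: B' rule: cons.induct)
  case (c_refl A) then show ?case by (rule step_cons)
next
  case (c_dynL A) show ?case by (rule cons.c_dynL)
next
  case (c_dynR A) then show ?case by (auto elim: stE_Dyn)
next
  case (c_fun A1 B1 A2 B2) then show ?case by (auto elim!: stE_Fun intro: cons.c_fun)
next
  case (c_all A B K) then show ?case by (auto elim!: stE_All intro: cons.c_all)
next
  case (c_allL B A K)
  then show ?case using step_QPoly step_lift by (metis cons.c_allL)
next
  case (c_allR A B K) then show ?case by (auto elim!: stE_All intro: cons.c_allR)
next
  case (c_rcd r1 r2) then show ?case by (auto elim!: stE_Rcd intro: cons.c_rcd)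
next
  case (c_vnt r1 r2) then show ?case by (auto elim!: stE_Vnt intro: cons.c_vnt)
next
  case (c_rowL B l B0 r2 A r1)
  obtain C' r' where h: "rmatch B' l C' r'" "C' = B0 \<or> step B0 C'" "r' = r2 \<or> step r2 r'"
    using rm_step[OF c_rowL.hyps(1) c_rowL.prems] by blast
  have "cons A C'" using h(2) c_rowL by auto
  moreover have "cons r1 r'" using h(3) c_rowL by auto
  ultimately show ?case using h(1) by (meson cons.c_rowL)
next
  case (c_rowR A l A' r1 B r2)
  from c_rowR.prems show ?case
  proof (cases rule: stE_RCons)
    case (1 l' Y r)
    have "cons r1 (RCons l' Y r)" using c_rowR 1 by simp
    moreover have "rmatch B' l B (RCons l' Y r)" using 1 by (auto intro: rmatch.intros)
    ultimately show ?thesis using cons_ins c_rowR.hyps by blast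
  next
    case (2 B0)
    then show ?thesis using c_rowR by (auto intro: cons.c_rowR)
  next
    case (3 r0)
    then show ?thesis using c_rowR by (auto intro: cons.c_rowR)
  qed
qed

lemma cons_steps: "step\<^sup>*\<^sup>* B B' \<Longrightarrow> cons A B \<Longrightarrow> cons A B'"
  by (induction rule: rtranclp_induct) (auto intro: cons_step)

lemma cons_sym: "cons A B \<Longrightarrow> cons B A"
  by (induction rule: cons.induct) (auto intro: cons.intros)

lemma cons_teq: "teq A A' \<Longrightarrow> cons A' B' \<Longrightarrow> teq B' B \<Longrightarrow> cons A B"
proof -
  assume h: "teq A A'" "cons A' B'" "teq B' B"
  have "cons A' B" using cons_steps[OF teq_steps[OF h(3)] h(2)] .
  then have "cons B A'" by (rule cons_sym)
  then have "cons B A" using cons_steps teq_steps teq_sym h(1) by blast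
  then show ?thesis by (rule cons_sym)
qed

lemma sim_cons: "sim A B \<Longrightarrow> cons A B"
proof (induction rule: sim.induct)
  case (s_rcons A B r1 r2 l) then show ?case by (metis c_rowL rm_head)
next
  case (s_rowL l r2 r1 A)
  then have "rmatch r2 l Dyn r2" using rmatch_dyn ends_dyn_ed by blast
  then show ?case using s_rowL by (metis c_rowL c_dynR)
next
  case (s_rowR l r1 r2 B)
  then have "rmatch r1 l Dyn r1" using rmatch_dyn ends_dyn_ed by blast
  then show ?case using s_rowR by (metis c_rowR c_dynL)
qed (auto intro: cons.intros)

lemma rm_teq: "rmatch B l B' r2 \<Longrightarrow> teq (RCons l B' r2) B \<or> (B' = Dyn \<and> r2 = B \<and> l \<notin> rdom B \<and> ed B)"
proof (induction rule: rmatch.induct)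
  case (rm_head l A r) then show ?case by (auto intro: teq_refl)
next
  case (rm_tail l' l r A r' B)
  then show ?case
  proof (elim disjE)
    assume "teq (RCons l A r') r"
    then have "teq (RCons l A (RCons l' B r')) (RCons l' B r)"
      using rm_tail.hyps by (metis teq_swap teq_rcons teq_refl teq_trans)
    then show ?thesis by simp
  qed auto
qed auto

lemma cons_sim: "cons A B \<Longrightarrow> \<exists>A' B'. teq A A' \<and> sim A' B' \<and> teq B' B"
proof (induction rule: cons.induct)
  case (c_refl A) then show ?case by (auto intro: teq_refl s_refl)
next
  case (c_dynL A) then show ?case by (auto intro: teq_refl s_dynL)
next
  case (c_dynR A) then show ?case by (auto intro: teq_refl s_dynR)
next
  case (c_fun A1 B1 A2 B2) then show ?case by (meson teq_fun s_fun)
next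
  case (c_all A B K) then show ?case by (meson teq_all s_all)
next
  case (c_rcd r1 r2) then show ?case by (meson teq_rcd s_rcd)
next
  case (c_vnt r1 r2) then show ?case by (meson teq_vnt s_vnt)
next
  case (c_allL B A K)
  then obtain A1 C where h: "teq A A1" "sim A1 C" "teq C (lift 0 B)" by blast
  then obtain B'' where h2: "C = lift 0 B''" "teq B'' B" using teq_unlift by blast
  have "QPoly B''" using c_allL.hyps(1) h2(2) teq_QPoly by blast
  then have "sim (All K A1) B''" using h h2 by (auto intro: s_allL)
  then show ?case using h h2 by (meson teq_all)
next
  case (c_allR A B K)
  then obtain A1 C where h: "teq (lift 0 A) C" "sim C A1" "teq A1 B" by blast
  then obtain A'' where h2: "C = lift 0 A''" "teq A'' A" using teq_unlift teq_sym by blast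
  have "QPoly A''" using c_allR.hyps(1) h2(2) teq_QPoly by blast
  then have "sim A'' (All K A1)" using h h2 by (auto intro: s_allR)
  then show ?case using h h2 by (meson teq_all teq_sym)
next
  case (c_rowL B l B0 r2 A r1)
  then obtain A1 B1 r1' r2' where h: "teq A A1" "sim A1 B1" "teq B1 B0" "teq r1 r1'" "sim r1' r2'" "teq r2' r2"
    by blast
  from rm_teq[OF c_rowL.hyps(1)] show ?case
  proof (elim disjE conjE)
    assume "teq (RCons l B0 r2) B"
    then show ?thesis using h by (meson teq_rcons s_rcons teq_trans)
  next
    assume e: "B0 = Dyn" "r2 = B" "l \<notin> rdom B" "ed B"
    have "l \<notin> rdom r2'" "ed r2'" using e h(6) teq_inv teq_ed by auto
    then have "sim (RCons l A1 r1') r2'" using h(5) ends_dyn_ed by (auto intro: s_rowL)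
    then show ?thesis using h e by (meson teq_rcons)
  qed
next
  case (c_rowR A l A0 r1 B r2)
  then obtain A1 B1 r1' r2' where h: "teq A0 A1" "sim A1 B1" "teq B1 B" "teq r1 r1'" "sim r1' r2'" "teq r2' r2"
    by blast
  from rm_teq[OF c_rowR.hyps(1)] show ?case
  proof (elim disjE conjE)
    assume "teq (RCons l A0 r1) A"
    then show ?thesis using h by (meson teq_rcons s_rcons teq_trans teq_sym)
  next
    assume e: "A0 = Dyn" "r1 = A" "l \<notin> rdom A" "ed A"
    have "l \<notin> rdom r1'" "ed r1'" using e h(4) teq_inv teq_ed by auto
    then have "sim r1' (RCons l B1 r2')" using h(5) ends_dyn_ed by (auto intro: s_rowR)
    then show ?thesis using h e by (meson teq_rcons)
  qed
qed

theorem mainTheorem1: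
  shows "cons A B \<longleftrightarrow> (\<exists>A' B'. teq A A' \<and> sim A' B' \<and> teq B' B)"
  using cons_sim sim_cons cons_teq by blast

end
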